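(* Let $h:(\mathbb{R}^n,0)\to(\mathbb{R}^n,0)$ be an (SSP) bi-Lipschitz homeomorphism germ, and let $A\subset\mathbb{R}^n$ be a set-germ at $0$ with $0\in\overline{A}$. Then $A$ satisfies condition (SSP) if and only if $h(A)$ satisfies condition (SSP).
   Context: For a set-germ $A\subset\mathbb{R}^k$ at $0$ with $0\in\overline A$, the direction set is $D(A)=\{a\in S^{k-1}:\exists\, x_i\in A\setminus\{0\},\ x_i\to0,\ x_i/\|x_i\|\to a\}$. For sequences, $\|u_m\|\ll\|v_m\|,\|w_m\|$ means $\|u_m\|/\|v_m\|\to0$ and $\|u_m\|/\|w_m\|\to0$. A set-germ $A\subset\mathbb{R}^k$ with $0\in\overline A$ satisfies condition (SSP) if for every sequence $a_m\in\mathbb{R}^k$ tending to $0$ with $\lim a_m/\|a_m\|\in D(A)$ there is a sequence $b_m\in A$ with $\|a_m-b_m\|\ll\|a_m\|,\|b_m\|$. A map germ $h:(\mathbb{R}^n,0)\to(\mathbb{R}^n,0)$ is an (SSP) map if its graph $\{(x,h(x))\}\subset\mathbb{R}^n\times\mathbb{R}^n$ satisfies condition (SSP) at $(0,0)$. A bi-Lipschitz homeomorphism germ is a homeomorphism germ $h$ with $h(0)=0$ and constants $0<K_1\le K_2$ with $K_1\|x-y\|\le\|h(x)-h(y)\|\le K_2\|x-y\|$ near $0$; it is an (SSP) bi-Lipschitz homeomorphism if it is moreover an (SSP) map. *)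

theory Defs
  imports "HOL-Analysis.Analysis"
begin

definition direction_set :: "'a::real_normed_vector set \<Rightarrow> 'a set" where
  "direction_set A = {a. norm a = 1 \<and>
     (\<exists>x::nat \<Rightarrow> 'a. (\<forall>i. x i \<in> A - {0}) \<and> x \<longlonglongrightarrow> 0 \<and>
        (\<lambda>i. x i /\<^sub>R norm (x i)) \<longlonglongrightarrow> a)}"

definition much_smaller :: "(nat \<Rightarrow> 'a::real_normed_vector) \<Rightarrow> (nat \<Rightarrow> 'b::real_normed_vector) \<Rightarrow> bool" where
  "much_smaller u v \<longleftrightarrow> eventually (\<lambda>m. v m \<noteq> 0) sequentially \<and>
      (\<lambda>m. norm (u m) / norm (v m)) \<longlonglongrightarrow> 0"

definition SSP :: "'a::real_normed_vector set \<Rightarrow> bool" where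
  "SSP A \<longleftrightarrow> (\<forall>a::nat \<Rightarrow> 'a. a \<longlonglongrightarrow> 0 \<and>
       (\<exists>d\<in>direction_set A. (\<lambda>m. a m /\<^sub>R norm (a m)) \<longlonglongrightarrow> d) \<longrightarrow>
     (\<exists>b. (\<forall>m. b m \<in> A) \<and> much_smaller (\<lambda>m. a m - b m) a
          \<and> much_smaller (\<lambda>m. a m - b m) b))"

text \<open>A map germ represented by h on an open neighbourhood U of 0 is (SSP) if its graph is.\<close>
definition SSP_map_on :: "'a::real_normed_vector set \<Rightarrow> ('a \<Rightarrow> 'a) \<Rightarrow> bool" where
  "SSP_map_on U h \<longleftrightarrow> SSP {(x, h x) | x. x \<in> U}"

definition bilipschitz_homeo_germ_on :: "'a::real_normed_vector set \<Rightarrow> ('a \<Rightarrow> 'a) \<Rightarrow> bool" where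
  "bilipschitz_homeo_germ_on U h \<longleftrightarrow> open U \<and> 0 \<in> U \<and> h 0 = 0 \<and> open (h ` U) \<and>
     (\<exists>g. homeomorphism U (h ` U) h g) \<and>
     (\<exists>K1 K2. 0 < K1 \<and> K1 \<le> K2 \<and>
        (\<forall>x\<in>U. \<forall>y\<in>U. K1 * norm (x - y) \<le> norm (h x - h y) \<and>
                       norm (h x - h y) \<le> K2 * norm (x - y)))"

end

theory Submission
  imports Defs
begin

lemma ms_iff:
  "much_smaller u v \<longleftrightarrow>
    (\<forall>e>0. eventually (\<lambda>m. v m \<noteq> 0 \<and> norm (u m) \<le> e * norm (v m)) sequentially)"
proof
  assume A: "much_smaller u v"
  show "\<forall>e>0. eventually (\<lambda>m. v m \<noteq> 0 \<and> norm (u m) \<le> e * norm (v m)) sequentially"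
  proof (intro allI impI)
    fix e :: real assume e: "e > 0"
    from A have 1: "eventually (\<lambda>m. v m \<noteq> 0) sequentially"
      and 2: "(\<lambda>m. norm (u m) / norm (v m)) \<longlonglongrightarrow> 0" by (auto simp: much_smaller_def)
    from 2 e have "eventually (\<lambda>m. dist (norm (u m) / norm (v m)) 0 < e) sequentially"
      by (simp add: tendsto_iff)
    with 1 show "eventually (\<lambda>m. v m \<noteq> 0 \<and> norm (u m) \<le> e * norm (v m)) sequentially"
    proof eventually_elim
      case (elim m)
      then have "norm (u m) / norm (v m) < e" by simp
      with elim(1) show ?case by (simp add: divide_less_eq)
    qed
  qed
next
  assume B: "\<forall>e>0. eventually (\<lambda>m. v m \<noteq> 0 \<and> norm (u m) \<le> e * norm (v m)) sequentially"
  have 1: "eventually (\<lambda>m. v m \<noteq> 0) sequentially"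
    using B[rule_format, of 1] by (auto elim: eventually_mono)
  have "(\<lambda>m. norm (u m) / norm (v m)) \<longlonglongrightarrow> 0"
    unfolding tendsto_iff
  proof (intro allI impI)
    fix e :: real assume e: "e > 0"
    have "e/2 > 0" using e by simp
    from B[rule_format, OF this]
    have "eventually (\<lambda>m. v m \<noteq> 0 \<and> norm (u m) \<le> (e/2) * norm (v m)) sequentially" .
    then show "eventually (\<lambda>m. dist (norm (u m) / norm (v m)) 0 < e) sequentially"
    proof eventually_elim
      case (elim m)
      then have "norm (u m) / norm (v m) \<le> e/2" by (subst pos_divide_le_eq) auto
      moreover have "norm (u m) / norm (v m) \<ge> 0" by simp
      ultimately have "\<bar>norm (u m) / norm (v m)\<bar> < e" using e by linarith
      then show ?case by simp
    qed
  qed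
  with 1 show "much_smaller u v" by (simp add: much_smaller_def)
qed

lemma ms_le:
  assumes "eventually (\<lambda>m. norm (u m) \<le> C * norm (u' m)) sequentially" "much_smaller u' w"
  shows "much_smaller u w"
  unfolding ms_iff
proof (intro allI impI)
  fix e :: real assume e: "e > 0"
  define C' where "C' = max C 1"
  have C': "C' > 0" "C \<le> C'" by (auto simp: C'_def)
  have "e/C' > 0" using e C' by simp
  from assms(2)[unfolded ms_iff, rule_format, OF this]
  have "eventually (\<lambda>m. w m \<noteq> 0 \<and> norm (u' m) \<le> (e/C') * norm (w m)) sequentially" .
  with assms(1) show "eventually (\<lambda>m. w m \<noteq> 0 \<and> norm (u m) \<le> e * norm (w m)) sequentially"
  proof eventually_elim
    case (elim m)
    have "norm (u m) \<le> C' * norm (u' m)"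
      using elim(1) C' by (meson mult_right_mono norm_ge_zero order_trans)
    also have "\<dots> \<le> C' * ((e/C') * norm (w m))" using elim(2) C' by (intro mult_left_mono) auto
    also have "\<dots> = e * norm (w m)" using C' by simp
    finally show ?case using elim by simp
  qed
qed

lemma ms_bigO:
  assumes "much_smaller u v" "eventually (\<lambda>m. norm (v m) \<le> C * norm (w m)) sequentially"
    "eventually (\<lambda>m. w m \<noteq> 0) sequentially"
  shows "much_smaller u w"
  unfolding ms_iff
proof (intro allI impI)
  fix e :: real assume e: "e > 0"
  define C' where "C' = max C 1"
  have C': "C' > 0" "C \<le> C'" by (auto simp: C'_def)
  have "e/C' > 0" using e C' by simp
  from assms(1)[unfolded ms_iff, rule_format, OF this]
  have "eventually (\<lambda>m. v m \<noteq> 0 \<and> norm (u m) \<le> (e/C') * norm (v m)) sequentially" .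
  with assms(2,3) show "eventually (\<lambda>m. w m \<noteq> 0 \<and> norm (u m) \<le> e * norm (w m)) sequentially"
  proof eventually_elim
    case (elim m)
    have "norm (v m) \<le> C' * norm (w m)"
      using elim(1) C' by (meson mult_right_mono norm_ge_zero order_trans)
    then have "(e/C') * norm (v m) \<le> (e/C') * (C' * norm (w m))"
      using e C' by (intro mult_left_mono) auto
    also have "\<dots> = e * norm (w m)" using C' by simp
    finally show ?case using elim by simp
  qed
qed

lemma ms_add:
  assumes "much_smaller u w" "much_smaller v w"
  shows "much_smaller (\<lambda>m. u m + v m) w"
  unfolding ms_iff
proof (intro allI impI)
  fix e :: real assume e: "e > 0"
  have e2: "e/2 > 0" using e by simp
  have "eventually (\<lambda>m. w m \<noteq> 0 \<and> norm (u m) \<le> (e/2) * norm (w m)) sequentially"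
       "eventually (\<lambda>m. w m \<noteq> 0 \<and> norm (v m) \<le> (e/2) * norm (w m)) sequentially"
    using assms(1)[unfolded ms_iff, rule_format, OF e2] assms(2)[unfolded ms_iff, rule_format, OF e2] .
  then show "eventually (\<lambda>m. w m \<noteq> 0 \<and> norm (u m + v m) \<le> e * norm (w m)) sequentially"
  proof eventually_elim
    case (elim m)
    have "norm (u m + v m) \<le> norm (u m) + norm (v m)" by (rule norm_triangle_ineq)
    with elim show ?case by simp
  qed
qed

lemma ms_sym:
  assumes "much_smaller (\<lambda>m. a m - b m) a"
  shows "much_smaller (\<lambda>m. a m - b m) b"
  unfolding ms_iff
proof (intro allI impI)
  fix e :: real assume e: "e > 0"
  define e' where "e' = min (1/2) (e/2)"
  have e': "e' > 0" "e' \<le> 1/2" "e' \<le> e/2" by (auto simp: e'_def e)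
  have "eventually (\<lambda>m. a m \<noteq> 0 \<and> norm (a m - b m) \<le> e' * norm (a m)) sequentially"
    using assms[unfolded ms_iff, rule_format, OF e'(1)] .
  then show "eventually (\<lambda>m. b m \<noteq> 0 \<and> norm (a m - b m) \<le> e * norm (b m)) sequentially"
  proof eventually_elim
    case (elim m)
    have t: "norm (a m) \<le> norm (b m) + norm (a m - b m)"
      by (metis norm_triangle_ineq add_diff_cancel_left' add.commute diff_add_cancel)
    have na: "norm (a m) > 0" using elim by simp
    have "e' * norm (a m) \<le> (1/2) * norm (a m)" using e' by (intro mult_right_mono) auto
    then have "norm (a m - b m) \<le> norm (a m) / 2" using elim by linarith
    with t have nb: "norm (a m) \<le> 2 * norm (b m)" by simp
    then have "b m \<noteq> 0" using na by auto
    moreover have "e' * norm (a m) \<le> (e/2) * norm (a m)" using e' by (intro mult_right_mono) auto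
    then have "norm (a m - b m) \<le> (e/2) * norm (a m)" using elim by linarith
    moreover have "(e/2) * norm (a m) \<le> (e/2) * (2 * norm (b m))"
      using nb e by (intro mult_left_mono) auto
    ultimately show ?case by simp
  qed
qed

lemma ms_cong:
  assumes "much_smaller u v" "eventually (\<lambda>m. u m = u' m \<and> v m = v' m) sequentially"
  shows "much_smaller u' v'"
  using assms unfolding ms_iff
  by (auto elim: eventually_elim2)

lemma dir_nonzero:
  assumes "(\<lambda>m. a m /\<^sub>R norm (a m)) \<longlonglongrightarrow> d" "norm d = 1"
  shows "eventually (\<lambda>m. a m \<noteq> 0) sequentially"
proof -
  have "eventually (\<lambda>m. dist (a m /\<^sub>R norm (a m)) d < 1) sequentially"
    using assms(1) by (simp add: tendsto_iff)
  then show ?thesis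
    by eventually_elim (use assms(2) in \<open>auto simp: dist_norm\<close>)
qed

lemma unit_diff_le:
  fixes u v :: "'a::real_normed_vector"
  assumes "v \<noteq> 0"
  shows "norm (u /\<^sub>R norm u - v /\<^sub>R norm v) \<le> 2 * (norm (u - v) / norm v)"
proof (cases "u = 0")
  case True
  then show ?thesis using assms by simp
next
  case False
  have nu: "norm u > 0" and nv: "norm v > 0" using False assms by auto
  have eq: "u /\<^sub>R norm u - v /\<^sub>R norm v
      = (u - v) /\<^sub>R norm v + ((norm v - norm u) / (norm u * norm v)) *\<^sub>R u"
  proof -
    have c: "1 / norm v + (norm v - norm u) / (norm u * norm v) = 1 / norm u"
      using nu nv by (simp add: field_simps)
    have "(u - v) /\<^sub>R norm v + ((norm v - norm u) / (norm u * norm v)) *\<^sub>R u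
        = (1 / norm v + (norm v - norm u) / (norm u * norm v)) *\<^sub>R u - v /\<^sub>R norm v"
      by (simp add: scaleR_left_distrib scaleR_diff_right divide_inverse)
    also have "\<dots> = u /\<^sub>R norm u - v /\<^sub>R norm v" using c by (simp add: divide_inverse)
    finally show ?thesis by simp
  qed
  have "norm (((norm v - norm u) / (norm u * norm v)) *\<^sub>R u) = \<bar>norm v - norm u\<bar> / norm v"
    using nu nv by (simp add: divide_simps abs_mult)
  also have "\<dots> \<le> norm (u - v) / norm v"
    using nv by (intro divide_right_mono) (auto, metis norm_triangle_ineq3 norm_minus_commute abs_minus_commute)
  finally have 2: "norm (((norm v - norm u) / (norm u * norm v)) *\<^sub>R u) \<le> norm (u - v) / norm v" .
  have "norm (u /\<^sub>R norm u - v /\<^sub>R norm v)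
      \<le> norm ((u - v) /\<^sub>R norm v) + norm (((norm v - norm u) / (norm u * norm v)) *\<^sub>R u)"
    unfolding eq by (rule norm_triangle_ineq)
  also have "norm ((u - v) /\<^sub>R norm v) = norm (u - v) / norm v" using nv by (simp add: divide_inverse mult.commute)
  finally show ?thesis using 2 by simp
qed

lemma dir_close:
  assumes "(\<lambda>m. v m /\<^sub>R norm (v m)) \<longlonglongrightarrow> d" "much_smaller (\<lambda>m. u m - v m) v"
  shows "(\<lambda>m. u m /\<^sub>R norm (u m)) \<longlonglongrightarrow> d"
proof -
  from assms(2) have nz: "eventually (\<lambda>m. v m \<noteq> 0) sequentially"
    and r: "(\<lambda>m. norm (u m - v m) / norm (v m)) \<longlonglongrightarrow> 0" by (auto simp: much_smaller_def)
  have "(\<lambda>m. u m /\<^sub>R norm (u m) - v m /\<^sub>R norm (v m)) \<longlonglongrightarrow> 0"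
  proof (rule Lim_null_comparison)
    show "eventually (\<lambda>m. norm (u m /\<^sub>R norm (u m) - v m /\<^sub>R norm (v m))
            \<le> 2 * (norm (u m - v m) / norm (v m))) sequentially"
      using nz by eventually_elim (rule unit_diff_le)
    show "(\<lambda>m. 2 * (norm (u m - v m) / norm (v m))) \<longlonglongrightarrow> 0"
      using tendsto_mult_right_zero[OF r] by simp
  qed
  from tendsto_add[OF this assms(1)] show ?thesis by simp
qed

lemma norm_swap [simp]: "norm (prod.swap x) = norm x"
  by (cases x) (simp add: norm_Pair add.commute)

lemma swap_zero [simp]: "prod.swap 0 = 0"
  by (simp add: zero_prod_def)

lemma swap_scaleR [simp]: "prod.swap (c *\<^sub>R x) = c *\<^sub>R prod.swap x"
  by (cases x) simp

lemma norm_swap_diff: "norm (prod.swap x - y) = norm (x - prod.swap y)"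
  by (cases x, cases y) (simp add: norm_Pair add.commute)

lemma swap_eq_zero [simp]: "prod.swap x = 0 \<longleftrightarrow> x = 0"
  by (cases x) (auto simp: zero_prod_def)

lemma tendsto_swap_seq:
  assumes "f \<longlonglongrightarrow> l"
  shows "(\<lambda>i. prod.swap (f i)) \<longlonglongrightarrow> prod.swap l"
proof -
  have "(\<lambda>i. (snd (f i), fst (f i))) \<longlonglongrightarrow> (snd l, fst l)"
    by (intro tendsto_intros assms)
  then show ?thesis by (simp add: prod.swap_def)
qed

lemma dir_swap:
  assumes "d \<in> direction_set (prod.swap ` S)"
  shows "prod.swap d \<in> direction_set S"
proof -
  from assms obtain x where x: "\<And>i. x i \<in> prod.swap ` S - {0}" "x \<longlonglongrightarrow> 0"
    "(\<lambda>i. x i /\<^sub>R norm (x i)) \<longlonglongrightarrow> d" "norm d = 1"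
    unfolding direction_set_def by blast
  have 1: "\<forall>i. prod.swap (x i) \<in> S - {0}"
  proof
    fix i
    from x(1)[of i] have xi: "x i \<in> prod.swap ` S" "x i \<noteq> 0" by auto
    from xi(1) obtain s where "s \<in> S" "x i = prod.swap s" by blast
    with xi(2) have "s \<in> S" "x i = prod.swap s" "x i \<noteq> 0" by auto
    then show "prod.swap (x i) \<in> S - {0}" by (cases s) (auto simp: zero_prod_def)
  qed
  have 2: "(\<lambda>i. prod.swap (x i)) \<longlonglongrightarrow> 0"
    using tendsto_swap_seq[OF x(2)] by simp
  have 3: "(\<lambda>i. prod.swap (x i) /\<^sub>R norm (prod.swap (x i))) \<longlonglongrightarrow> prod.swap d"
    using tendsto_swap_seq[OF x(3)] by simp
  show ?thesis unfolding direction_set_def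
    using 1 2 3 x(4) by (intro CollectI conjI exI[of _ "\<lambda>i. prod.swap (x i)"]) auto
qed

lemma SSP_swap:
  fixes S :: "('a::real_normed_vector \<times> 'b::real_normed_vector) set"
  assumes "SSP S"
  shows "SSP (prod.swap ` S)"
  unfolding SSP_def
proof (intro allI impI, elim conjE bexE)
  fix a :: "nat \<Rightarrow> 'b \<times> 'a" and d
  assume a0: "a \<longlonglongrightarrow> 0" and dD: "d \<in> direction_set (prod.swap ` S)"
    and ad: "(\<lambda>m. a m /\<^sub>R norm (a m)) \<longlonglongrightarrow> d"
  have "(\<lambda>m. prod.swap (a m)) \<longlonglongrightarrow> 0" using tendsto_swap_seq[OF a0] by simp
  moreover have "(\<lambda>m. prod.swap (a m) /\<^sub>R norm (prod.swap (a m))) \<longlonglongrightarrow> prod.swap d"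
    using tendsto_swap_seq[OF ad] by simp
  ultimately obtain b where b: "\<forall>m. b m \<in> S"
    "much_smaller (\<lambda>m. prod.swap (a m) - b m) (\<lambda>m. prod.swap (a m))"
    "much_smaller (\<lambda>m. prod.swap (a m) - b m) b"
    using assms dir_swap[OF dD] unfolding SSP_def by blast
  have e: "\<And>m. norm (prod.swap (a m) - b m) = norm (a m - prod.swap (b m))"
    by (rule norm_swap_diff)
  show "\<exists>b. (\<forall>m. b m \<in> prod.swap ` S) \<and> much_smaller (\<lambda>m. a m - b m) a \<and>
          much_smaller (\<lambda>m. a m - b m) b"
  proof (intro exI[of _ "\<lambda>m. prod.swap (b m)"] conjI)
    show "\<forall>m. prod.swap (b m) \<in> prod.swap ` S" using b(1) by auto
    show "much_smaller (\<lambda>m. a m - prod.swap (b m)) a"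
      using b(2) unfolding much_smaller_def e by simp
    show "much_smaller (\<lambda>m. a m - prod.swap (b m)) (\<lambda>m. prod.swap (b m))"
      using b(3) unfolding much_smaller_def e by simp
  qed
qed

lemma dir_germ:
  assumes U: "open U" "0 \<in> U"
  shows "direction_set (A \<inter> U) = direction_set A"
proof
  show "direction_set (A \<inter> U) \<subseteq> direction_set A"
    unfolding direction_set_def by blast
  show "direction_set A \<subseteq> direction_set (A \<inter> U)"
  proof
    fix d assume "d \<in> direction_set A"
    then obtain x where x: "\<And>i. x i \<in> A - {0}" "x \<longlonglongrightarrow> 0"
      "(\<lambda>i. x i /\<^sub>R norm (x i)) \<longlonglongrightarrow> d" "norm d = 1"
      unfolding direction_set_def by blast
    have "eventually (\<lambda>i. x i \<in> U) sequentially"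
      using topological_tendstoD[OF x(2) U] .
    then obtain N where N: "\<And>i. i \<ge> N \<Longrightarrow> x i \<in> U" by (auto simp: eventually_sequentially)
    have 1: "\<forall>i. x (i + N) \<in> A \<inter> U - {0}" using x(1) N by auto
    have 2: "(\<lambda>i. x (i + N)) \<longlonglongrightarrow> 0" using LIMSEQ_ignore_initial_segment[OF x(2)] .
    have 3: "(\<lambda>i. x (i + N) /\<^sub>R norm (x (i + N))) \<longlonglongrightarrow> d"
      using LIMSEQ_ignore_initial_segment[OF x(3)] .
    show "d \<in> direction_set (A \<inter> U)" unfolding direction_set_def
      using 1 2 3 x(4) by (intro CollectI conjI exI[of _ "\<lambda>i. x (i + N)"]) auto
  qed
qed

lemma ms_bounded:
  assumes "much_smaller (\<lambda>m. a m - b m) a" "a \<longlonglongrightarrow> 0"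
  shows "b \<longlonglongrightarrow> 0"
proof (rule Lim_null_comparison)
  have "eventually (\<lambda>m. a m \<noteq> 0 \<and> norm (a m - b m) \<le> 1 * norm (a m)) sequentially"
    using assms(1)[unfolded ms_iff, rule_format, of 1] by simp
  then show "eventually (\<lambda>m. norm (b m) \<le> 2 * norm (a m)) sequentially"
  proof eventually_elim
    case (elim m)
    have "norm (b m) \<le> norm (a m) + norm (a m - b m)"
      using norm_triangle_ineq4[of "a m" "a m - b m"] by simp
    with elim show ?case by simp
  qed
  show "(\<lambda>m. 2 * norm (a m)) \<longlonglongrightarrow> 0"
    using tendsto_mult_right_zero[OF tendsto_norm_zero[OF assms(2)]] by simp
qed

lemma SSP_germ:
  fixes A U :: "'a::real_normed_vector set"
  assumes U: "open U" "0 \<in> U"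
  shows "SSP (A \<inter> U) \<longleftrightarrow> SSP A"
proof
  assume S: "SSP (A \<inter> U)"
  show "SSP A" unfolding SSP_def
  proof (intro allI impI)
    fix a :: "nat \<Rightarrow> 'a"
    assume "a \<longlonglongrightarrow> 0 \<and> (\<exists>d\<in>direction_set A. (\<lambda>m. a m /\<^sub>R norm (a m)) \<longlonglongrightarrow> d)"
    then have "a \<longlonglongrightarrow> 0 \<and> (\<exists>d\<in>direction_set (A \<inter> U). (\<lambda>m. a m /\<^sub>R norm (a m)) \<longlonglongrightarrow> d)"
      by (simp only: dir_germ[OF U, of A])
    from S[unfolded SSP_def, rule_format, OF this]
    obtain b where "\<forall>m. b m \<in> A \<inter> U" "much_smaller (\<lambda>m. a m - b m) a"
      "much_smaller (\<lambda>m. a m - b m) b" by blast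
    then show "\<exists>b. (\<forall>m. b m \<in> A) \<and> much_smaller (\<lambda>m. a m - b m) a
          \<and> much_smaller (\<lambda>m. a m - b m) b" by blast
  qed
next
  assume S: "SSP A"
  show "SSP (A \<inter> U)" unfolding SSP_def
  proof (intro allI impI, elim conjE bexE)
    fix a :: "nat \<Rightarrow> 'a" and d
    assume a0: "a \<longlonglongrightarrow> 0" and dD: "d \<in> direction_set (A \<inter> U)"
      and ad: "(\<lambda>m. a m /\<^sub>R norm (a m)) \<longlonglongrightarrow> d"
    from dD obtain x :: "nat \<Rightarrow> 'a" where "\<And>i. x i \<in> A \<inter> U - {0}" unfolding direction_set_def by blast
    then have p0: "x 0 \<in> A \<inter> U" by blast
    have "a \<longlonglongrightarrow> 0 \<and> (\<exists>d\<in>direction_set A. (\<lambda>m. a m /\<^sub>R norm (a m)) \<longlonglongrightarrow> d)"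
      using a0 ad dD unfolding dir_germ[OF U, of A] by blast
    from S[unfolded SSP_def, rule_format, OF this]
    obtain b where b: "\<forall>m. b m \<in> A" "much_smaller (\<lambda>m. a m - b m) a"
      "much_smaller (\<lambda>m. a m - b m) b" by blast
    have "b \<longlonglongrightarrow> 0" using ms_bounded[OF b(2) a0] .
    then have ev: "eventually (\<lambda>m. b m \<in> U) sequentially"
      using topological_tendstoD U by blast
    define b' where "b' m = (if b m \<in> U then b m else x 0)" for m
    have ev2: "eventually (\<lambda>m. b' m = b m) sequentially"
      using ev by eventually_elim (simp add: b'_def)
    show "\<exists>b. (\<forall>m. b m \<in> A \<inter> U) \<and> much_smaller (\<lambda>m. a m - b m) a
          \<and> much_smaller (\<lambda>m. a m - b m) b"
    proof (intro exI[of _ b'] conjI)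
      show "\<forall>m. b' m \<in> A \<inter> U" using b(1) p0 by (auto simp: b'_def)
      show "much_smaller (\<lambda>m. a m - b' m) a"
        by (rule ms_cong[OF b(2)]) (use ev2 in \<open>auto elim: eventually_mono\<close>)
      show "much_smaller (\<lambda>m. a m - b' m) b'"
        by (rule ms_cong[OF b(3)]) (use ev2 in \<open>auto elim: eventually_mono\<close>)
    qed
  qed
qed

lemma unit_scale:
  fixes c :: "'a::real_normed_vector"
  assumes "t > 0"
  shows "(t *\<^sub>R c) /\<^sub>R norm (t *\<^sub>R c) = c /\<^sub>R norm c"
proof (cases "c = 0")
  case True then show ?thesis by simp
next
  case False
  have n: "norm (t *\<^sub>R c) = t * norm c" using assms by simp
  have "inverse (t * norm c) * t = inverse (norm c)" using assms False by (simp add: field_simps)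
  then show ?thesis unfolding n scaleR_scaleR by simp
qed

lemma main_lemma:
  fixes \<phi> \<psi> :: "'a::euclidean_space \<Rightarrow> 'a" and U B :: "'a set" and k K :: real
  assumes k: "0 < k" "k \<le> K"
    and lip: "\<And>x y. x \<in> U \<Longrightarrow> y \<in> U \<Longrightarrow>
       k * norm (x - y) \<le> norm (\<phi> x - \<phi> y) \<and> norm (\<phi> x - \<phi> y) \<le> K * norm (x - y) \<and>
       k * norm (x - y) \<le> norm (\<psi> x - \<psi> y) \<and> norm (\<psi> x - \<psi> y) \<le> K * norm (x - y)"
    and z: "0 \<in> U" "\<phi> 0 = 0" "\<psi> 0 = 0"
    and G: "SSP {(\<phi> x, \<psi> x) | x. x \<in> U}"
    and BU: "B \<subseteq> U"
    and S: "SSP (\<psi> ` B)"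
  shows "SSP (\<phi> ` B)"
  unfolding SSP_def
proof (intro allI impI, elim conjE bexE)
  fix a :: "nat \<Rightarrow> 'a" and d
  assume a0: "a \<longlonglongrightarrow> 0" and dD: "d \<in> direction_set (\<phi> ` B)"
    and ad: "(\<lambda>m. a m /\<^sub>R norm (a m)) \<longlonglongrightarrow> d"
  have K: "K > 0" using k by simp
  have pb: "k * norm x \<le> norm (\<phi> x) \<and> norm (\<phi> x) \<le> K * norm x \<and>
        k * norm x \<le> norm (\<psi> x) \<and> norm (\<psi> x) \<le> K * norm x" if "x \<in> U" for x
    using lip[OF that z(1)] z by simp
  from dD obtain x where xB: "\<And>i. x i \<in> \<phi> ` B - {0}" and x0: "x \<longlonglongrightarrow> 0"
    and xd: "(\<lambda>i. x i /\<^sub>R norm (x i)) \<longlonglongrightarrow> d" and nd: "norm d = 1"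
    unfolding direction_set_def by blast
  have "\<forall>i. \<exists>yy. yy \<in> B \<and> x i = \<phi> yy" using xB by blast
  from choice[OF this] obtain y where y: "\<forall>i. y i \<in> B \<and> x i = \<phi> (y i)" by blast
  then have yB: "\<And>i. y i \<in> B" and xy: "\<And>i. x i = \<phi> (y i)" by auto
  have yU: "y i \<in> U" for i using yB BU by blast
  have xnz: "\<phi> (y i) \<noteq> 0" for i using xB xy by auto
  have ynz: "y i \<noteq> 0" for i using xnz[of i] z(2) by force
  have ny: "norm (y i) \<le> norm (x i) / k" for i
    using pb[OF yU[of i]] xy[of i] k by (simp add: pos_le_divide_eq mult.commute)
  have y0: "y \<longlonglongrightarrow> 0"
  proof (rule Lim_null_comparison)
    show "eventually (\<lambda>i. norm (y i) \<le> norm (x i) / k) sequentially" using ny by simp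
    show "(\<lambda>i. norm (x i) / k) \<longlonglongrightarrow> 0"
      using tendsto_divide_zero[OF tendsto_norm_zero[OF x0]] by simp
  qed
  define v where "v i = (\<phi> (y i), \<psi> (y i))" for i
  have vG: "v i \<in> {(\<phi> x, \<psi> x) | x. x \<in> U}" for i using yU by (auto simp: v_def)
  have nv: "norm (v i) \<le> 2 * K * norm (y i)" for i
  proof -
    have "norm (v i) \<le> norm (\<phi> (y i)) + norm (\<psi> (y i))" unfolding v_def by (rule norm_Pair_le)
    then show ?thesis using pb[OF yU[of i]] by simp
  qed
  have vnz: "v i \<noteq> 0" for i using xnz by (simp add: v_def zero_prod_def)
  have nvpos: "norm (v i) > 0" for i using vnz by simp
  have fb: "k / (2 * K) \<le> norm (\<phi> (y i)) / norm (v i)" for i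
  proof -
    have "k * norm (v i) \<le> k * (2 * K * norm (y i))" using nv[of i] k by (intro mult_left_mono) auto
    also have "\<dots> = 2 * K * (k * norm (y i))" by simp
    also have "\<dots> \<le> 2 * K * norm (\<phi> (y i))" using pb[OF yU[of i]] K by (intro mult_left_mono) auto
    finally show ?thesis using K nvpos[of i] by (simp add: field_simps)
  qed
  have sb: "k / (2 * K) \<le> norm (\<psi> (y i)) / norm (v i)" for i
  proof -
    have "k * norm (v i) \<le> k * (2 * K * norm (y i))" using nv[of i] k by (intro mult_left_mono) auto
    also have "\<dots> = 2 * K * (k * norm (y i))" by simp
    also have "\<dots> \<le> 2 * K * norm (\<psi> (y i))" using pb[OF yU[of i]] K by (intro mult_left_mono) auto
    finally show ?thesis using K nvpos[of i] by (simp add: field_simps)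
  qed
  define s where "s i = v i /\<^sub>R norm (v i)" for i
  have "s i \<in> sphere 0 1" for i using vnz by (simp add: s_def)
  then obtain l r where lS: "l \<in> sphere 0 1" and r: "strict_mono r" and sl: "(s \<circ> r) \<longlonglongrightarrow> l"
    using compact_sphere[of "0::'a \<times> 'a" 1] unfolding compact_def by meson
  obtain p q where lpq: "l = (p, q)" by (cases l)
  have npq: "norm (p, q) = 1" using lS lpq by simp
  have v0: "v \<longlonglongrightarrow> 0"
  proof (rule Lim_null_comparison)
    show "eventually (\<lambda>i. norm (v i) \<le> 2 * K * norm (y i)) sequentially" using nv by simp
    show "(\<lambda>i. 2 * K * norm (y i)) \<longlonglongrightarrow> 0"
      using tendsto_mult_right_zero[OF tendsto_norm_zero[OF y0]] by simp
  qed
  let ?\<Gamma> = "{(\<phi> x, \<psi> x) | x. x \<in> U}"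
  have pqD: "(p, q) \<in> direction_set ?\<Gamma>"
    unfolding direction_set_def
  proof (intro CollectI conjI exI[of _ "v \<circ> r"])
    show "norm (p, q) = 1" by (rule npq)
    show "\<forall>i. (v \<circ> r) i \<in> ?\<Gamma> - {0}" using vG vnz by simp
    show "(v \<circ> r) \<longlonglongrightarrow> 0" using LIMSEQ_subseq_LIMSEQ[OF v0 r] .
    show "(\<lambda>i. (v \<circ> r) i /\<^sub>R norm ((v \<circ> r) i)) \<longlonglongrightarrow> (p, q)"
      using sl lpq by (simp add: s_def comp_def)
  qed
  have sfst: "(\<lambda>i. fst (s (r i))) \<longlonglongrightarrow> p" using tendsto_fst[OF sl] lpq by (simp add: comp_def)
  have ssnd: "(\<lambda>i. snd (s (r i))) \<longlonglongrightarrow> q" using tendsto_snd[OF sl] lpq by (simp add: comp_def)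
  have fs: "fst (s i) = \<phi> (y i) /\<^sub>R norm (v i)" for i by (simp add: s_def v_def)
  have ss: "snd (s i) = \<psi> (y i) /\<^sub>R norm (v i)" for i by (simp add: s_def v_def)
  have nfs: "norm (fst (s i)) = norm (\<phi> (y i)) / norm (v i)" for i by (simp add: fs divide_inverse mult.commute)
  have nss: "norm (snd (s i)) = norm (\<psi> (y i)) / norm (v i)" for i by (simp add: ss divide_inverse mult.commute)
  have np: "k / (2 * K) \<le> norm p"
    using LIMSEQ_le_const[OF tendsto_norm[OF sfst]] fb nfs by auto
  have nq: "k / (2 * K) \<le> norm q"
    using LIMSEQ_le_const[OF tendsto_norm[OF ssnd]] sb nss by auto
  have pos: "k / (2 * K) > 0" using k K by simp
  have np0: "norm p > 0" and nq0: "norm q > 0" using np nq pos by linarith+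
  have p_eq: "p = norm p *\<^sub>R d"
  proof -
    have e: "fst (s (r i)) = norm (fst (s (r i))) *\<^sub>R (x (r i) /\<^sub>R norm (x (r i)))" for i
      using xnz[of "r i"] nvpos[of "r i"] by (simp add: fs nfs xy)
    have "(\<lambda>i. norm (fst (s (r i))) *\<^sub>R (x (r i) /\<^sub>R norm (x (r i)))) \<longlonglongrightarrow> norm p *\<^sub>R d"
      using tendsto_scaleR[OF tendsto_norm[OF sfst] LIMSEQ_subseq_LIMSEQ[OF xd r, unfolded comp_def]] .
    then have "(\<lambda>i. fst (s (r i))) \<longlonglongrightarrow> norm p *\<^sub>R d" using e by simp
    then show ?thesis using sfst LIMSEQ_unique by blast
  qed
  have qdir: "(\<lambda>i. \<psi> (y (r i)) /\<^sub>R norm (\<psi> (y (r i)))) \<longlonglongrightarrow> q /\<^sub>R norm q"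
  proof -
    have e: "\<psi> (y (r i)) /\<^sub>R norm (\<psi> (y (r i))) = inverse (norm (snd (s (r i)))) *\<^sub>R snd (s (r i))" for i
      using nvpos[of "r i"] by (simp add: ss nss)
    have "(\<lambda>i. inverse (norm (snd (s (r i)))) *\<^sub>R snd (s (r i))) \<longlonglongrightarrow> inverse (norm q) *\<^sub>R q"
      using nq0 by (intro tendsto_intros ssnd) auto
    then show ?thesis using e by simp
  qed
  have psinz: "\<psi> (y i) \<noteq> 0" for i
  proof -
    have "k * norm (y i) > 0" using k ynz by simp
    then show ?thesis using pb[OF yU[of i]] by auto
  qed
  have qD: "q /\<^sub>R norm q \<in> direction_set (\<psi> ` B)"
    unfolding direction_set_def
  proof (intro CollectI conjI exI[of _ "\<lambda>i. \<psi> (y (r i))"])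
    show "norm (q /\<^sub>R norm q) = 1" using nq0 by simp
    show "\<forall>i. \<psi> (y (r i)) \<in> \<psi> ` B - {0}" using yB psinz by auto
    have "(\<lambda>i. \<psi> (y i)) \<longlonglongrightarrow> 0"
    proof (rule Lim_null_comparison)
      show "eventually (\<lambda>i. norm (\<psi> (y i)) \<le> K * norm (y i)) sequentially"
        using pb yU by simp
      show "(\<lambda>i. K * norm (y i)) \<longlonglongrightarrow> 0"
        using tendsto_mult_right_zero[OF tendsto_norm_zero[OF y0]] by simp
    qed
    from LIMSEQ_subseq_LIMSEQ[OF this r] show "(\<lambda>i. \<psi> (y (r i))) \<longlonglongrightarrow> 0" by (simp add: comp_def)
    show "(\<lambda>i. \<psi> (y (r i)) /\<^sub>R norm (\<psi> (y (r i)))) \<longlonglongrightarrow> q /\<^sub>R norm q" by (rule qdir)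
  qed
  have anz: "eventually (\<lambda>m. a m \<noteq> 0) sequentially" using dir_nonzero[OF ad nd] .
  define Q where "Q = norm q / norm p"
  have Q: "Q > 0" using np0 nq0 by (simp add: Q_def)
  define zz where "zz m = (norm (a m) / norm p) *\<^sub>R q" for m
  define A' where "A' m = (a m, zz m)" for m
  have nzz: "norm (zz m) = Q * norm (a m)" for m
    using np0 by (simp add: zz_def Q_def)
  have na0: "(\<lambda>m. norm (a m)) \<longlonglongrightarrow> 0" using tendsto_norm_zero[OF a0] .
  have zz0: "zz \<longlonglongrightarrow> 0"
  proof -
    have "(\<lambda>m. (norm (a m) / norm p) *\<^sub>R q) \<longlonglongrightarrow> (0 / norm p) *\<^sub>R q"
      using np0 by (intro tendsto_intros na0) auto
    then show ?thesis by (simp add: zz_def[abs_def])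
  qed
  have A'0: "A' \<longlonglongrightarrow> 0"
    using tendsto_Pair[OF a0 zz0] by (simp add: A'_def[abs_def] zero_prod_def)
  have A'dir: "(\<lambda>m. A' m /\<^sub>R norm (A' m)) \<longlonglongrightarrow> (p, q)"
  proof -
    define c where "c m = (norm p *\<^sub>R (a m /\<^sub>R norm (a m)), q)" for m
    have "c \<longlonglongrightarrow> (norm p *\<^sub>R d, q)"
      unfolding c_def[abs_def] by (intro tendsto_intros ad)
    then have c1: "c \<longlonglongrightarrow> (p, q)" using p_eq by simp
    have "(\<lambda>m. inverse (norm (c m)) *\<^sub>R c m) \<longlonglongrightarrow> inverse (norm (p, q)) *\<^sub>R (p, q)"
      using npq by (intro tendsto_intros c1) auto
    then have c2: "(\<lambda>m. c m /\<^sub>R norm (c m)) \<longlonglongrightarrow> (p, q)" using npq by simp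
    have "eventually (\<lambda>m. c m /\<^sub>R norm (c m) = A' m /\<^sub>R norm (A' m)) sequentially"
      using anz
    proof eventually_elim
      case (elim m)
      have t: "norm (a m) / norm p > 0" using elim np0 by simp
      have e: "A' m = (norm (a m) / norm p) *\<^sub>R c m"
        using elim np0 by (simp add: A'_def c_def zz_def)
      show ?case unfolding e by (rule unit_scale[OF t, symmetric])
    qed
    then show ?thesis by (rule Lim_transform_eventually[OF c2])
  qed
  have "\<exists>d\<in>direction_set ?\<Gamma>. (\<lambda>m. A' m /\<^sub>R norm (A' m)) \<longlonglongrightarrow> d"
    using A'dir pqD by blast
  from G[unfolded SSP_def, rule_format, of A', OF conjI[OF A'0 this]]
  obtain g where g: "\<forall>m. g m \<in> ?\<Gamma>" "much_smaller (\<lambda>m. A' m - g m) A'"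
    by blast
  have "\<forall>m. \<exists>ww. ww \<in> U \<and> g m = (\<phi> ww, \<psi> ww)" using g(1) by blast
  from choice[OF this] obtain w where w: "\<forall>m. w m \<in> U \<and> g m = (\<phi> (w m), \<psi> (w m))" by blast
  then have wU: "\<And>m. w m \<in> U" and gw: "\<And>m. g m = (\<phi> (w m), \<psi> (w m))" by auto
  define cc where "cc m = \<psi> (w m)" for m
  have dfst: "norm (a m - \<phi> (w m)) \<le> 1 * norm (A' m - g m)" for m
    using norm_fst_le[of "a m - \<phi> (w m)" "zz m - \<psi> (w m)"] by (simp add: A'_def gw)
  have dsnd: "norm (cc m - zz m) \<le> 1 * norm (A' m - g m)" for m
  proof -
    have "norm (cc m - zz m) = norm (zz m - \<psi> (w m))" by (simp add: cc_def norm_minus_commute)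
    moreover have eqd: "A' m - g m = (a m - \<phi> (w m), zz m - \<psi> (w m))" by (simp add: A'_def gw)
    ultimately show ?thesis using norm_snd_le[of "zz m - \<psi> (w m)" "a m - \<phi> (w m)"]
      unfolding eqd by linarith
  qed
  have nA'a: "norm (A' m) \<le> (1 + Q) * norm (a m)" for m
    using norm_Pair_le[of "a m" "zz m"] nzz[of m] by (simp add: A'_def algebra_simps)
  have nA'z: "norm (A' m) \<le> (1 / Q + 1) * norm (zz m)" for m
    using norm_Pair_le[of "a m" "zz m"] nzz[of m] Q by (simp add: A'_def algebra_simps)
  have zznz: "eventually (\<lambda>m. zz m \<noteq> 0) sequentially"
    using anz
  proof eventually_elim
    case (elim m)
    have "norm (zz m) > 0" using nzz[of m] Q elim by simp
    then show ?case by auto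
  qed
  have ms1: "much_smaller (\<lambda>m. cc m - zz m) zz"
  proof -
    have e1: "eventually (\<lambda>m. norm (cc m - zz m) \<le> 1 * norm (A' m - g m)) sequentially"
      by (intro always_eventually allI dsnd)
    have e2: "eventually (\<lambda>m. norm (A' m) \<le> (1 / Q + 1) * norm (zz m)) sequentially"
      by (intro always_eventually allI nA'z)
    show ?thesis by (rule ms_bigO[OF ms_le[OF e1 g(2)] e2 zznz])
  qed
  have zzdir: "(\<lambda>m. zz m /\<^sub>R norm (zz m)) \<longlonglongrightarrow> q /\<^sub>R norm q"
  proof -
    have "eventually (\<lambda>m. q /\<^sub>R norm q = zz m /\<^sub>R norm (zz m)) sequentially"
      using anz
    proof eventually_elim
      case (elim m)
      have t: "norm (a m) / norm p > 0" using elim np0 by simp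
      show ?case unfolding zz_def by (rule unit_scale[OF t, symmetric])
    qed
    then show ?thesis by (rule Lim_transform_eventually[OF tendsto_const])
  qed
  have ccdir: "(\<lambda>m. cc m /\<^sub>R norm (cc m)) \<longlonglongrightarrow> q /\<^sub>R norm q"
    using dir_close[OF zzdir ms1] .
  have ccb: "eventually (\<lambda>m. norm (cc m) \<le> 2 * norm (zz m)) sequentially"
  proof -
    have "eventually (\<lambda>m. zz m \<noteq> 0 \<and> norm (cc m - zz m) \<le> 1 * norm (zz m)) sequentially"
      using ms1[unfolded ms_iff, rule_format, of 1] by simp
    then show ?thesis
    proof eventually_elim
      case (elim m)
      have "norm (cc m) \<le> norm (cc m - zz m) + norm (zz m)"
        using norm_triangle_ineq[of "cc m - zz m" "zz m"] by simp
      with elim show ?case by simp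
    qed
  qed
  have cc0: "cc \<longlonglongrightarrow> 0"
  proof (rule Lim_null_comparison[OF ccb])
    show "(\<lambda>m. 2 * norm (zz m)) \<longlonglongrightarrow> 0"
      using tendsto_mult_right_zero[OF tendsto_norm_zero[OF zz0]] by simp
  qed
  have "\<exists>d\<in>direction_set (\<psi> ` B). (\<lambda>m. cc m /\<^sub>R norm (cc m)) \<longlonglongrightarrow> d"
    using ccdir qD by blast
  from S[unfolded SSP_def, rule_format, of cc, OF conjI[OF cc0 this]]
  obtain b'' where b'': "\<forall>m. b'' m \<in> \<psi> ` B" "much_smaller (\<lambda>m. cc m - b'' m) cc"
    by blast
  have "\<forall>m. \<exists>yy. yy \<in> B \<and> b'' m = \<psi> yy" using b''(1) by blast
  from choice[OF this] obtain y' where y': "\<forall>m. y' m \<in> B \<and> b'' m = \<psi> (y' m)" by blast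
  then have y'B: "\<And>m. y' m \<in> B" and by': "\<And>m. b'' m = \<psi> (y' m)" by auto
  define bb where "bb m = \<phi> (y' m)" for m
  have part1: "much_smaller (\<lambda>m. a m - \<phi> (w m)) a"
  proof -
    have e1: "eventually (\<lambda>m. norm (a m - \<phi> (w m)) \<le> 1 * norm (A' m - g m)) sequentially"
      by (intro always_eventually allI dfst)
    have e2: "eventually (\<lambda>m. norm (A' m) \<le> (1 + Q) * norm (a m)) sequentially"
      by (intro always_eventually allI nA'a)
    show ?thesis by (rule ms_bigO[OF ms_le[OF e1 g(2)] e2 anz])
  qed
  have lipw: "norm (\<phi> (w m) - \<phi> (y' m)) \<le> (K / k) * norm (cc m - b'' m)" for m
  proof -
    have l: "k * norm (w m - y' m) \<le> norm (\<psi> (w m) - \<psi> (y' m))"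
      "norm (\<phi> (w m) - \<phi> (y' m)) \<le> K * norm (w m - y' m)"
      using lip[OF wU[of m], of "y' m"] y'B BU by auto
    have "norm (w m - y' m) \<le> norm (\<psi> (w m) - \<psi> (y' m)) / k"
      using l(1) k by (simp add: pos_le_divide_eq mult.commute)
    then have "K * norm (w m - y' m) \<le> K * (norm (\<psi> (w m) - \<psi> (y' m)) / k)"
      using K by (intro mult_left_mono) auto
    then show ?thesis using l(2) by (simp add: cc_def by')
  qed
  have ccza: "eventually (\<lambda>m. norm (cc m) \<le> (2 * Q) * norm (a m)) sequentially"
    using ccb by eventually_elim (simp add: nzz)
  have part2: "much_smaller (\<lambda>m. \<phi> (w m) - \<phi> (y' m)) a"
  proof -
    have e1: "eventually (\<lambda>m. norm (\<phi> (w m) - \<phi> (y' m)) \<le> (K / k) * norm (cc m - b'' m)) sequentially"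
      by (intro always_eventually allI lipw)
    show ?thesis by (rule ms_bigO[OF ms_le[OF e1 b''(2)] ccza anz])
  qed
  have msa: "much_smaller (\<lambda>m. a m - bb m) a"
  proof -
    have "(\<lambda>m. a m - bb m) = (\<lambda>m. (a m - \<phi> (w m)) + (\<phi> (w m) - \<phi> (y' m)))"
      by (simp add: bb_def)
    then show ?thesis using ms_add[OF part1 part2] by simp
  qed
  show "\<exists>b. (\<forall>m. b m \<in> \<phi> ` B) \<and> much_smaller (\<lambda>m. a m - b m) a \<and>
          much_smaller (\<lambda>m. a m - b m) b"
  proof (intro exI[of _ bb] conjI)
    show "\<forall>m. bb m \<in> \<phi> ` B" using y'B by (simp add: bb_def)
    show "much_smaller (\<lambda>m. a m - bb m) a" by (rule msa)
    show "much_smaller (\<lambda>m. a m - bb m) bb" using ms_sym[OF msa] by simp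
  qed
qed

theorem theorem4p7:
  fixes h :: "'a::euclidean_space \<Rightarrow> 'a" and U A :: "'a set"
  assumes "bilipschitz_homeo_germ_on U h"
    and "SSP_map_on U h"
    and "0 \<in> closure A"
  shows "SSP A \<longleftrightarrow> SSP (h ` (A \<inter> U))"
proof -
  from assms(1) obtain K1 K2 where U: "open U" "0 \<in> U" and h0: "h 0 = 0"
    and K: "0 < K1" "K1 \<le> K2"
    and L: "\<And>x y. x \<in> U \<Longrightarrow> y \<in> U \<Longrightarrow> K1 * norm (x - y) \<le> norm (h x - h y) \<and>
                       norm (h x - h y) \<le> K2 * norm (x - y)"
    unfolding bilipschitz_homeo_germ_on_def by (elim conjE exE) blast
  define k where "k = min K1 1"
  define KK where "KK = max K2 1"
  have k: "0 < k" "k \<le> KK" using K by (auto simp: k_def KK_def)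
  have L2: "k * norm (x - y) \<le> norm (h x - h y) \<and> norm (h x - h y) \<le> KK * norm (x - y)
        \<and> k * norm (x - y) \<le> norm (x - y) \<and> norm (x - y) \<le> KK * norm (x - y)"
    if "x \<in> U" "y \<in> U" for x y
  proof -
    have a1: "k * norm (x - y) \<le> K1 * norm (x - y)" by (rule mult_right_mono) (auto simp: k_def)
    have a2: "K2 * norm (x - y) \<le> KK * norm (x - y)" by (rule mult_right_mono) (auto simp: KK_def)
    have a3: "k * norm (x - y) \<le> 1 * norm (x - y)" by (rule mult_right_mono) (auto simp: k_def)
    have a4: "1 * norm (x - y) \<le> KK * norm (x - y)" by (rule mult_right_mono) (auto simp: KK_def)
    note a = a1 a2 a3 a4
    show ?thesis using L[OF that] a by auto
  qed
  have G1: "SSP {(id x, h x) | x. x \<in> U}"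
    using assms(2) unfolding SSP_map_on_def by simp
  have "prod.swap ` {(x, h x) | x. x \<in> U} = {(h x, id x) | x. x \<in> U}" by auto
  then have G2: "SSP {(h x, id x) | x. x \<in> U}"
    using SSP_swap[OF assms(2)[unfolded SSP_map_on_def]] by simp
  have lipA: "\<And>x y. x \<in> U \<Longrightarrow> y \<in> U \<Longrightarrow> k * norm (x - y) \<le> norm (h x - h y) \<and>
      norm (h x - h y) \<le> KK * norm (x - y) \<and> k * norm (x - y) \<le> norm (id x - id y) \<and>
      norm (id x - id y) \<le> KK * norm (x - y)"
    using L2 by simp
  have lipB: "\<And>x y. x \<in> U \<Longrightarrow> y \<in> U \<Longrightarrow> k * norm (x - y) \<le> norm (id x - id y) \<and>
      norm (id x - id y) \<le> KK * norm (x - y) \<and> k * norm (x - y) \<le> norm (h x - h y) \<and>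
      norm (h x - h y) \<le> KK * norm (x - y)"
    using L2 by simp
  have id0: "id 0 = (0::'a)" by simp
  have BU: "A \<inter> U \<subseteq> U" by blast
  show ?thesis
  proof
    assume "SSP A"
    then have S1: "SSP (id ` (A \<inter> U))" using SSP_germ[OF U, of A] by simp
    show "SSP (h ` (A \<inter> U))"
      by (rule main_lemma[where \<phi>=h and \<psi>=id and U=U and B="A \<inter> U" and k=k and K=KK,
            OF k _ U(2) h0 id0 G2 BU S1], rule lipA, assumption+)
  next
    assume S2: "SSP (h ` (A \<inter> U))"
    have "SSP (id ` (A \<inter> U))"
      by (rule main_lemma[where \<phi>=id and \<psi>=h and U=U and B="A \<inter> U" and k=k and K=KK,
            OF k _ U(2) id0 h0 G1 BU S2], rule lipB, assumption+)
    then show "SSP A" using SSP_germ[OF U, of A] by simp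
  qed
qed

end
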